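(* Let $G=\langle a,b\mid a^2b=ba^2\rangle$, let $\hat G$ be its pro-$2$ completion, and let $\hat H\subset\hat G$ be the kernel of the continuous homomorphism $\hat G\to\mathbb Z/2\mathbb Z$ sending $a\mapsto0$ and $b\mapsto1$ (equivalently, the pro-$2$ completion of the kernel $H$ of the corresponding homomorphism $G\to\mathbb Z/2\mathbb Z$). Then: (1) the reduction maps $H^1(\hat G,\mathbb Z/2^n\mathbb Z)\to H^1(\hat G,\mathbb Z/2\mathbb Z)$ are surjective for all $n\ge1$; (2) the reduction map $H^1(\hat H,\mathbb Z/4\mathbb Z)\to H^1(\hat H,\mathbb Z/2\mathbb Z)$ is not surjective; (3) there exist $\chi_1,\chi_2,\chi_3\in H^1(\hat G,\mathbb Z/2\mathbb Z)$ such that the mod 2 Massey product $\langle\chi_1,\chi_2,\chi_3\rangle$ is defined but does not vanish.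
   Context: All coefficient modules have trivial action. Massey products: for $a_1,\dots,a_n\in H^1$ of a differential graded ring $A$, a defining system is $a_{ij}\in A^1$ ($1\le i<j\le n+1$, $(i,j)\neq(1,n+1)$) with $\partial a_{i,i+1}=0$ representing $a_i$ and $\partial a_{ij}=-\sum_{l=i+1}^{j-1}a_{il}a_{lj}$; its value is the class of $-\sum_{l=2}^na_{1l}a_{l,n+1}$; $\langle a_1,\dots,a_n\rangle$ is the set of values, defined if nonempty, vanishing if it contains $0$. Mod 2 Massey products of $\hat G$ are taken in continuous cochains $C^*(\hat G,\mathbb Z/2\mathbb Z)$ with cup product. *)

theory Defs
  imports "HOL-Algebra.Algebra"
begin

datatype gen = Ga | Gb

type_synonym letter = "gen \<times> bool"   (* (generator, True = positive exponent) *)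

inductive wrel :: "letter list \<Rightarrow> letter list \<Rightarrow> bool" where
  wrefl: "wrel u u"
| wsym: "wrel u v \<Longrightarrow> wrel v u"
| wtrans: "wrel u v \<Longrightarrow> wrel v w \<Longrightarrow> wrel u w"
| wcancel: "wrel (u @ [(g, s), (g, \<not> s)] @ v) (u @ v)"
| wrelator: "wrel (u @ [(Ga, True), (Ga, True), (Gb, True)] @ v)
                  (u @ [(Gb, True), (Ga, True), (Ga, True)] @ v)"

definition Gmult :: "letter list set \<Rightarrow> letter list set \<Rightarrow> letter list set" where
  "Gmult A1 A2 = {w. \<exists>p\<in>A1. \<exists>q\<in>A2. wrel w (p @ q)}"

definition Gp :: "letter list set monoid" where
  "Gp = \<lparr>carrier = UNIV // {(u, v). wrel u v}, monoid.mult = Gmult, monoid.one = {w. wrel w []}\<rparr>"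

definition Hsub :: "letter list set set" where
  "Hsub = {S \<in> carrier Gp. \<forall>w\<in>S. even (length (filter (\<lambda>l. fst l = Gb) w))}"

definition Hp :: "letter list set monoid" where
  "Hp = Gp\<lparr>carrier := Hsub\<rparr>"

text \<open>Open normal subgroups of the pro-2 completion correspond to normal subgroups
  of 2-power index of the discrete group.\<close>
definition pro2_open :: "('g, 'b) monoid_scheme \<Rightarrow> 'g set \<Rightarrow> bool" where
  "pro2_open \<Gamma> N \<longleftrightarrow> N \<lhd> \<Gamma> \<and> finite (rcosets\<^bsub>\<Gamma>\<^esub> N) \<and> (\<exists>k::nat. card (rcosets\<^bsub>\<Gamma>\<^esub> N) = 2 ^ k)"

definition cont1 :: "('g, 'b) monoid_scheme \<Rightarrow> ('g \<Rightarrow> int) \<Rightarrow> bool" where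
  "cont1 \<Gamma> f \<longleftrightarrow> (\<exists>N. pro2_open \<Gamma> N \<and>
     (\<forall>x\<in>carrier \<Gamma>. \<forall>y\<in>carrier \<Gamma>. x \<otimes>\<^bsub>\<Gamma>\<^esub> inv\<^bsub>\<Gamma>\<^esub> y \<in> N \<longrightarrow> f x = f y))"

definition C1 :: "('g, 'b) monoid_scheme \<Rightarrow> int \<Rightarrow> ('g \<Rightarrow> int) set" where
  "C1 \<Gamma> m = {f. cont1 \<Gamma> f \<and> (\<forall>x. f x \<in> {0..<m}) \<and> (\<forall>x. x \<notin> carrier \<Gamma> \<longrightarrow> f x = 0)}"

text \<open>H^1 with trivial action: 1-cocycles (the 1-coboundaries are 0).
  Differential: (d f)(x,y) = f y - f (x y) + f x.\<close>
definition H1 :: "('g, 'b) monoid_scheme \<Rightarrow> int \<Rightarrow> ('g \<Rightarrow> int) set" where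
  "H1 \<Gamma> m = {f \<in> C1 \<Gamma> m. \<forall>x\<in>carrier \<Gamma>. \<forall>y\<in>carrier \<Gamma>.
                 (f y - f (x \<otimes>\<^bsub>\<Gamma>\<^esub> y) + f x) mod m = 0}"

definition reduce2 :: "('g \<Rightarrow> int) \<Rightarrow> ('g \<Rightarrow> int)" where
  "reduce2 f = (\<lambda>x. f x mod 2)"

definition massey3_values ::
  "('g, 'b) monoid_scheme \<Rightarrow> ('g \<Rightarrow> int) \<Rightarrow> ('g \<Rightarrow> int) \<Rightarrow> ('g \<Rightarrow> int) \<Rightarrow> ('g \<Rightarrow> 'g \<Rightarrow> int) set" where
  "massey3_values \<Gamma> a12 a23 a34 =
     {v. \<exists>a13 \<in> C1 \<Gamma> 2. \<exists>a24 \<in> C1 \<Gamma> 2.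
        (\<forall>x\<in>carrier \<Gamma>. \<forall>y\<in>carrier \<Gamma>.
           (a13 y - a13 (x \<otimes>\<^bsub>\<Gamma>\<^esub> y) + a13 x) mod 2 = (- (a12 x * a23 y)) mod 2) \<and>
        (\<forall>x\<in>carrier \<Gamma>. \<forall>y\<in>carrier \<Gamma>.
           (a24 y - a24 (x \<otimes>\<^bsub>\<Gamma>\<^esub> y) + a24 x) mod 2 = (- (a23 x * a34 y)) mod 2) \<and>
        v = (\<lambda>x y. if x \<in> carrier \<Gamma> \<and> y \<in> carrier \<Gamma>
                    then (- (a12 x * a24 y + a13 x * a34 y)) mod 2 else 0)}"

definition massey3_defined ::
  "('g, 'b) monoid_scheme \<Rightarrow> ('g \<Rightarrow> int) \<Rightarrow> ('g \<Rightarrow> int) \<Rightarrow> ('g \<Rightarrow> int) \<Rightarrow> bool" where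
  "massey3_defined \<Gamma> c1 c2 c3 \<longleftrightarrow> massey3_values \<Gamma> c1 c2 c3 \<noteq> {}"

definition massey3_vanishes ::
  "('g, 'b) monoid_scheme \<Rightarrow> ('g \<Rightarrow> int) \<Rightarrow> ('g \<Rightarrow> int) \<Rightarrow> ('g \<Rightarrow> int) \<Rightarrow> bool" where
  "massey3_vanishes \<Gamma> c1 c2 c3 \<longleftrightarrow>
     (\<exists>v \<in> massey3_values \<Gamma> c1 c2 c3. \<exists>c \<in> C1 \<Gamma> 2.
        \<forall>x\<in>carrier \<Gamma>. \<forall>y\<in>carrier \<Gamma>. v x y = (c y - c (x \<otimes>\<^bsub>\<Gamma>\<^esub> y) + c x) mod 2)"

end

theory Submission
  imports Defs "HOL-Computational_Algebra.Primes"
begin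


lemma cont1_from_hom:
  assumes GG: "group \<Gamma>" and GK: "group K" and hh: "h \<in> hom \<Gamma> K"
    and fin: "finite (carrier K)" and cK: "card (carrier K) = 2 ^ m"
    and fac: "\<forall>x\<in>carrier \<Gamma>. \<forall>y\<in>carrier \<Gamma>. h x = h y \<longrightarrow> f x = f y"
  shows "cont1 \<Gamma> f"
proof -
  interpret gh: group_hom \<Gamma> K h using GG GK hh by (simp add: group_hom_def group_hom_axioms_def)
  define K' where "K' = K\<lparr>carrier := h ` carrier \<Gamma>\<rparr>"
  have sub: "subgroup (h ` carrier \<Gamma>) K" by (rule gh.img_is_subgroup)
  have gK': "group K'" unfolding K'_def by (rule subgroup.subgroup_is_group[OF sub GK])
  have hK': "h \<in> hom \<Gamma> K'" using hh unfolding K'_def hom_def by auto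
  interpret gh': group_hom \<Gamma> K' h using GG gK' hK' by (simp add: group_hom_def group_hom_axioms_def)
  have ker: "kernel \<Gamma> K' h = kernel \<Gamma> K h" unfolding kernel_def K'_def by simp
  have iso: "\<Gamma> Mod kernel \<Gamma> K h \<cong> K'"
    using gh'.FactGroup_iso[of] ker unfolding K'_def by simp
  have c1: "card (rcosets\<^bsub>\<Gamma>\<^esub> kernel \<Gamma> K h) = card (h ` carrier \<Gamma>)"
    using iso_same_card[OF iso] unfolding FactGroup_def K'_def by simp
  have "card (rcosets\<^bsub>K\<^esub> (h ` carrier \<Gamma>)) * card (h ` carrier \<Gamma>) = 2 ^ m"
    using group.lagrange[OF GK sub] cK by (simp add: order_def)
  hence "card (h ` carrier \<Gamma>) dvd 2 ^ m" by (metis dvd_triv_right)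
  then obtain k where k: "card (h ` carrier \<Gamma>) = 2 ^ k"
    using divides_primepow_nat[of 2] by auto
  have "finite (rcosets\<^bsub>\<Gamma>\<^esub> kernel \<Gamma> K h)"
    using c1 k by (metis card_ge_0_finite nat_zero_less_power_iff pos2)
  moreover have "kernel \<Gamma> K h \<lhd> \<Gamma>" by (rule gh.normal_kernel)
  moreover have "\<forall>x\<in>carrier \<Gamma>. \<forall>y\<in>carrier \<Gamma>. x \<otimes>\<^bsub>\<Gamma>\<^esub> inv\<^bsub>\<Gamma>\<^esub> y \<in> kernel \<Gamma> K h \<longrightarrow> f x = f y"
  proof (intro ballI impI)
    fix x y assume x: "x \<in> carrier \<Gamma>" and y: "y \<in> carrier \<Gamma>"
      and "x \<otimes>\<^bsub>\<Gamma>\<^esub> inv\<^bsub>\<Gamma>\<^esub> y \<in> kernel \<Gamma> K h"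
    hence "h x \<otimes>\<^bsub>K\<^esub> inv\<^bsub>K\<^esub> h y = \<one>\<^bsub>K\<^esub>" using x y by (simp add: kernel_def)
    hence "h x = h y" using x y by (metis gh.H.inv_equality gh.H.inv_inv gh.hom_closed gh.H.inv_closed)
    thus "f x = f y" using fac x y by blast
  qed
  ultimately show ?thesis unfolding cont1_def pro2_open_def using c1 k by (intro exI[of _ "kernel \<Gamma> K h"]) auto
qed



definition cls :: "letter list \<Rightarrow> letter list set" where
  "cls w = {v. wrel v w}"

lemma wrel_app_left: "wrel u v \<Longrightarrow> wrel (x @ u) (x @ v)"
proof (induction rule: wrel.induct)
  case (wcancel u g s v)
  then show ?case using wrel.wcancel[of "x @ u" g s v] by simp
next
  case (wrelator u v)
  then show ?case using wrel.wrelator[of "x @ u" v] by simp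
qed (auto intro: wrel.intros)

lemma wrel_app_right: "wrel u v \<Longrightarrow> wrel (u @ x) (v @ x)"
proof (induction rule: wrel.induct)
  case (wcancel u g s v)
  then show ?case using wrel.wcancel[of u g s "v @ x"] by simp
next
  case (wrelator u v)
  then show ?case using wrel.wrelator[of u "v @ x"] by simp
qed (auto intro: wrel.intros)

lemma wrel_app: "wrel u u' \<Longrightarrow> wrel v v' \<Longrightarrow> wrel (u @ v) (u' @ v')"
  by (meson wrel_app_left wrel_app_right wtrans)

lemma cls_eq_iff: "cls u = cls v \<longleftrightarrow> wrel u v"
proof
  assume "cls u = cls v"
  moreover have "u \<in> cls u" by (simp add: cls_def wrefl)
  ultimately show "wrel u v" by (simp add: cls_def)
next
  assume "wrel u v"
  then show "cls u = cls v" unfolding cls_def by (meson wsym wtrans)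
qed

lemma mem_cls: "x \<in> cls w \<longleftrightarrow> wrel x w"
  by (simp add: cls_def)

lemma carrier_Gp: "carrier Gp = range cls"
proof -
  have "{(u, v). wrel u v} `` {x} = cls x" for x
    unfolding cls_def by (auto intro: wsym)
  then show ?thesis unfolding Gp_def quotient_def by auto
qed

lemma cls_in_Gp [simp]: "cls w \<in> carrier Gp"
  by (simp add: carrier_Gp)

lemma Gp_elem: "x \<in> carrier Gp \<Longrightarrow> \<exists>w. x = cls w"
  by (auto simp: carrier_Gp)

lemma mult_cls [simp]: "cls p \<otimes>\<^bsub>Gp\<^esub> cls q = cls (p @ q)"
  unfolding Gp_def Gmult_def cls_def
  by (auto intro: wrefl dest: wrel_app intro: wtrans)

lemma one_Gp: "\<one>\<^bsub>Gp\<^esub> = cls []"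
  by (simp add: Gp_def cls_def)

definition winv :: "letter list \<Rightarrow> letter list" where
  "winv w = rev (map (\<lambda>(g, s). (g, \<not> s)) w)"

lemma winv_cancel: "wrel (winv w @ w) []"
proof (induction w)
  case Nil then show ?case by (simp add: winv_def wrefl)
next
  case (Cons l w)
  obtain g s where l: "l = (g, s)" by (cases l)
  have "winv (l # w) @ l # w = winv w @ [(g, \<not> s), (g, \<not> \<not> s)] @ w"
    by (simp add: winv_def l)
  moreover have "wrel (winv w @ [(g, \<not> s), (g, \<not> \<not> s)] @ w) (winv w @ w)"
    by (rule wcancel)
  ultimately show ?case using Cons wtrans by metis
qed

lemma group_Gp: "group Gp"
proof (rule groupI)
  fix x y assume "x \<in> carrier Gp" "y \<in> carrier Gp"
  then obtain p q where "x = cls p" "y = cls q" by (meson Gp_elem)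
  then show "x \<otimes>\<^bsub>Gp\<^esub> y \<in> carrier Gp" by simp
next
  show "\<one>\<^bsub>Gp\<^esub> \<in> carrier Gp" by (simp add: one_Gp)
next
  fix x y z assume "x \<in> carrier Gp" "y \<in> carrier Gp" "z \<in> carrier Gp"
  then obtain p q r where "x = cls p" "y = cls q" "z = cls r" by (meson Gp_elem)
  then show "x \<otimes>\<^bsub>Gp\<^esub> y \<otimes>\<^bsub>Gp\<^esub> z = x \<otimes>\<^bsub>Gp\<^esub> (y \<otimes>\<^bsub>Gp\<^esub> z)"
    by simp
next
  fix x assume "x \<in> carrier Gp"
  then obtain p where "x = cls p" by (meson Gp_elem)
  then show "\<one>\<^bsub>Gp\<^esub> \<otimes>\<^bsub>Gp\<^esub> x = x" by (simp add: one_Gp)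
next
  fix x assume "x \<in> carrier Gp"
  then obtain w where x: "x = cls w" by (auto simp: carrier_Gp)
  have "cls (winv w) \<otimes>\<^bsub>Gp\<^esub> x = \<one>\<^bsub>Gp\<^esub>"
    using winv_cancel[of w] by (simp add: x one_Gp cls_eq_iff)
  then show "\<exists>y\<in>carrier Gp. y \<otimes>\<^bsub>Gp\<^esub> x = \<one>\<^bsub>Gp\<^esub>" by (rule bexI[OF _ cls_in_Gp])
qed

lemma Gp_m_closed: "x \<in> carrier Gp \<Longrightarrow> y \<in> carrier Gp \<Longrightarrow> x \<otimes>\<^bsub>Gp\<^esub> y \<in> carrier Gp"
  by (rule monoid.m_closed[OF group.is_monoid[OF group_Gp]])

lemma mod_cocycle: "((a::int) - (b + a) mod M + b) mod M = 0"
proof -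
  have "(a - (b + a) mod M + b) mod M = (a - (b + a) + b) mod M"
    by (metis mod_add_left_eq mod_diff_right_eq)
  then show ?thesis by simp
qed

locale wordhom =
  fixes K :: "('k, 'z) monoid_scheme" and \<phi> :: "letter \<Rightarrow> 'k"
  assumes grpK: "group K"
    and phi_carr: "\<And>l. \<phi> l \<in> carrier K"
    and phi_cancel: "\<And>g s. \<phi> (g, s) \<otimes>\<^bsub>K\<^esub> \<phi> (g, \<not> s) = \<one>\<^bsub>K\<^esub>"
    and phi_rel: "\<phi> (Ga, True) \<otimes>\<^bsub>K\<^esub> (\<phi> (Ga, True) \<otimes>\<^bsub>K\<^esub> \<phi> (Gb, True))
                = \<phi> (Gb, True) \<otimes>\<^bsub>K\<^esub> (\<phi> (Ga, True) \<otimes>\<^bsub>K\<^esub> \<phi> (Ga, True))"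
begin

fun wphi :: "letter list \<Rightarrow> 'k" where
  "wphi [] = \<one>\<^bsub>K\<^esub>"
| "wphi (l # w) = \<phi> l \<otimes>\<^bsub>K\<^esub> wphi w"

lemma wphi_carr: "wphi w \<in> carrier K"
  by (induction w) (auto simp: phi_carr group.is_monoid[OF grpK] monoid.m_closed monoid.one_closed)

lemma wphi_append: "wphi (p @ q) = wphi p \<otimes>\<^bsub>K\<^esub> wphi q"
  by (induction p) (auto simp: wphi_carr phi_carr group.is_monoid[OF grpK] monoid.m_assoc monoid.l_one)

lemma wphi_wrel: "wrel u v \<Longrightarrow> wphi u = wphi v"
proof (induction rule: wrel.induct)
  case (wcancel u g s v)
  have "wphi [(g, s), (g, \<not> s)] = \<one>\<^bsub>K\<^esub>"
    using phi_cancel[of g s] phi_carr by (simp add: group.is_monoid[OF grpK] monoid.r_one)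
  then show ?case by (simp only: wphi_append) (simp add: wphi_carr group.is_monoid[OF grpK] monoid.l_one del: wphi.simps)
next
  case (wrelator u v)
  have "wphi [(Ga, True), (Ga, True), (Gb, True)] = wphi [(Gb, True), (Ga, True), (Ga, True)]"
    using phi_rel phi_carr by (simp add: group.is_monoid[OF grpK] monoid.r_one)
  then show ?case by (metis append_Cons append_Nil wphi_append)
qed auto

definition hS :: "letter list set \<Rightarrow> 'k" where
  "hS S = wphi (SOME w. w \<in> S)"

lemma hS_cls [simp]: "hS (cls w) = wphi w"
proof -
  have "(SOME v. v \<in> cls w) \<in> cls w" by (rule someI[of _ w]) (simp add: mem_cls wrefl)
  then show ?thesis unfolding hS_def by (simp add: mem_cls wphi_wrel)
qed

lemma hS_hom: "hS \<in> hom Gp K"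
  unfolding hom_def by (auto simp: carrier_Gp wphi_carr wphi_append)

end



lemma H1_hom:
  assumes "f \<in> H1 \<Gamma> m" "x \<in> carrier \<Gamma>" "y \<in> carrier \<Gamma>"
  shows "f (x \<otimes>\<^bsub>\<Gamma>\<^esub> y) = (f x + f y) mod m"
proof -
  have d: "(f y - f (x \<otimes>\<^bsub>\<Gamma>\<^esub> y) + f x) mod m = 0" and r: "f (x \<otimes>\<^bsub>\<Gamma>\<^esub> y) \<in> {0..<m}"
    using assms unfolding H1_def C1_def by auto
  have "f (x \<otimes>\<^bsub>\<Gamma>\<^esub> y) mod m = (f x + f y) mod m"
    using d by (simp add: mod_eq_dvd_iff dvd_diff_commute algebra_simps) (metis dvd_minus_iff minus_diff_eq add.commute diff_diff_eq2 mod_0_imp_dvd d)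
  then show ?thesis using r by simp
qed

lemma reduce2_sub:
  assumes "n \<ge> 1" "f \<in> H1 \<Gamma> (2 ^ n)"
  shows "reduce2 f \<in> H1 \<Gamma> 2"
proof -
  have c: "cont1 \<Gamma> f" and z: "\<forall>x. x \<notin> carrier \<Gamma> \<longrightarrow> f x = 0"
    and d: "\<forall>x\<in>carrier \<Gamma>. \<forall>y\<in>carrier \<Gamma>. (f y - f (x \<otimes>\<^bsub>\<Gamma>\<^esub> y) + f x) mod 2 ^ n = 0"
    using assms unfolding H1_def C1_def by auto
  have "cont1 \<Gamma> (reduce2 f)" using c unfolding cont1_def reduce2_def by metis
  moreover have "(reduce2 f y - reduce2 f (x \<otimes>\<^bsub>\<Gamma>\<^esub> y) + reduce2 f x) mod 2 = 0"
    if "x \<in> carrier \<Gamma>" "y \<in> carrier \<Gamma>" for x y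
  proof -
    have "(2::int) dvd 2 ^ n" using assms(1) by (simp add: dvd_power)
    moreover have "(2 ^ n :: int) dvd (f y - f (x \<otimes>\<^bsub>\<Gamma>\<^esub> y) + f x)" using d that by auto
    ultimately have "2 dvd (f y - f (x \<otimes>\<^bsub>\<Gamma>\<^esub> y) + f x)" by (rule dvd_trans)
    then show ?thesis unfolding reduce2_def by (simp add: mod_add_eq mod_diff_eq dvd_imp_mod_0 [symmetric])
  qed
  ultimately show ?thesis unfolding H1_def C1_def reduce2_def using z by auto
qed



lemma H1_range: "f \<in> H1 \<Gamma> m \<Longrightarrow> f x \<in> {0..<m}"
  unfolding H1_def C1_def by auto

lemma H1_off: "f \<in> H1 \<Gamma> m \<Longrightarrow> x \<notin> carrier \<Gamma> \<Longrightarrow> f x = 0"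
  unfolding H1_def C1_def by auto

lemma Gp_one_val:
  assumes "f \<in> H1 Gp 2" shows "f (cls []) = 0"
proof -
  have "f (cls [] \<otimes>\<^bsub>Gp\<^esub> cls []) = (f (cls []) + f (cls [])) mod 2"
    using H1_hom[OF assms cls_in_Gp cls_in_Gp, of "[]" "[]"] by simp
  then show ?thesis by simp
qed

lemma Gp_cons_val:
  assumes "f \<in> H1 Gp 2" shows "f (cls (l # w)) = (f (cls [l]) + f (cls w)) mod 2"
  using H1_hom[OF assms, of "cls [l]" "cls w"] by simp

lemma Gp_neg_val:
  assumes "f \<in> H1 Gp 2" shows "f (cls [(g, \<not> s)]) = f (cls [(g, s)])"
proof -
  have "cls [(g, s), (g, \<not> s)] = cls []"
    using wcancel[of "[]" g s "[]"] by (simp add: cls_eq_iff)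
  then have "(f (cls [(g, s)]) + f (cls [(g, \<not> s)])) mod 2 = 0"
    using Gp_cons_val[OF assms, of "(g,s)" "[(g, \<not> s)]"] Gp_one_val[OF assms] by simp
  then show ?thesis using H1_range[OF assms, of "cls [(g, s)]"] H1_range[OF assms, of "cls [(g, \<not> s)]"]
    by (auto; presburger)
qed

lemma Gp_letter_val:
  assumes "f \<in> H1 Gp 2" shows "f (cls [l]) = f (cls [(fst l, True)])"
  using Gp_neg_val[OF assms, of "fst l" True] by (cases l) (metis (full_types) fst_conv)

lemma part1_surj:
  assumes n: "n \<ge> 1" and f: "f \<in> H1 Gp 2"
  shows "f \<in> reduce2 ` H1 Gp (2 ^ n)"
proof -
  define M :: int where "M = 2 ^ n"
  have M0: "M > 0" by (simp add: M_def)
  have M2: "(2::int) dvd M" using n by (simp add: M_def dvd_power)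
  define \<phi> where "\<phi> l = ((if snd l then 1 else -1) * f (cls [(fst l, True)])) mod M" for l :: letter
  let ?K = "integer_mod_group (2 ^ n)"
  have cK: "carrier ?K = {0..<M}" by (simp add: carrier_integer_mod_group M_def)
  have i1: "\<phi> l \<in> carrier ?K" for l using M0 by (simp add: cK \<phi>_def)
  have i2: "\<phi> (g, s) \<otimes>\<^bsub>?K\<^esub> \<phi> (g, \<not> s) = \<one>\<^bsub>?K\<^esub>" for g s
      by (simp add: \<phi>_def flip: M_def) (simp add: mod_add_eq)
  have i3: "\<phi> (Ga, True) \<otimes>\<^bsub>?K\<^esub> (\<phi> (Ga, True) \<otimes>\<^bsub>?K\<^esub> \<phi> (Gb, True)) =
          \<phi> (Gb, True) \<otimes>\<^bsub>?K\<^esub> (\<phi> (Ga, True) \<otimes>\<^bsub>?K\<^esub> \<phi> (Ga, True))"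
      by (simp add: \<phi>_def flip: M_def) (simp add: mod_add_eq add_ac, metis mod_add_right_eq mod_mult_right_eq)
  interpret W: wordhom ?K \<phi>
    by (rule wordhom.intro[OF group_integer_mod_group i1 i2 i3])
  define F where "F S = (if S \<in> carrier Gp then W.hS S else 0)" for S
  have wmod: "W.wphi w mod 2 = f (cls w)" for w
  proof (induction w)
    case Nil then show ?case using Gp_one_val[OF f] by simp
  next
    case (Cons l w)
    have fl: "f (cls [l]) = f (cls [(fst l, True)])" by (rule Gp_letter_val[OF f])
    have r: "f (cls [(fst l, True)]) \<in> {0..<2}" by (rule H1_range[OF f])
    have "\<phi> l mod 2 = f (cls [(fst l, True)])"
      using r unfolding \<phi>_def by (auto simp: mod_mod_cancel[OF M2]; presburger)
    moreover have "W.wphi (l # w) mod 2 = (\<phi> l + W.wphi w) mod 2"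
      by (simp flip: M_def add: mod_mod_cancel[OF M2])
    ultimately show ?case using Cons Gp_cons_val[OF f, of l w] fl
      by (metis mod_add_eq)
  qed
  have FH: "F \<in> H1 Gp (2 ^ n)"
  proof -
    have hom: "W.hS \<in> hom Gp ?K" by (rule W.hS_hom)
    have "cont1 Gp F"
    proof (rule cont1_from_hom[OF group_Gp _ hom])
      show "group ?K" by simp
      show "finite (carrier ?K)" by (simp add: cK)
      show "card (carrier ?K) = 2 ^ n" by (simp add: cK M_def)
      show "\<forall>x\<in>carrier Gp. \<forall>y\<in>carrier Gp. W.hS x = W.hS y \<longrightarrow> F x = F y"
        by (simp add: F_def)
    qed
    moreover have "F x \<in> {0..<2 ^ n}" for x
      using hom_in_carrier[OF hom, of x] cK M_def by (auto simp: F_def)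
    moreover have "(F y - F (x \<otimes>\<^bsub>Gp\<^esub> y) + F x) mod 2 ^ n = 0"
      if "x \<in> carrier Gp" "y \<in> carrier Gp" for x y
    proof -
      have "W.hS (x \<otimes>\<^bsub>Gp\<^esub> y) = (W.hS x + W.hS y) mod M"
        using hom_mult[OF hom that] by (simp add: M_def)
      moreover have "x \<otimes>\<^bsub>Gp\<^esub> y \<in> carrier Gp" using that by (rule Gp_m_closed)
      ultimately show ?thesis using that by (simp add: F_def flip: M_def) (simp add: mod_cocycle)
    qed
    ultimately show ?thesis unfolding H1_def C1_def by (auto simp: F_def)
  qed
  have "reduce2 F = f"
  proof
    fix S show "reduce2 F S = f S"
    proof (cases "S \<in> carrier Gp")
      case True
      then obtain w where "S = cls w" using Gp_elem by blast
      then show ?thesis using wmod True by (simp add: reduce2_def F_def)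
    next
      case False
      then show ?thesis using H1_off[OF f False] by (simp add: reduce2_def F_def)
    qed
  qed
  then show ?thesis using FH by blast
qed

lemma part1: "\<forall>n::nat. n \<ge> 1 \<longrightarrow> reduce2 ` H1 Gp (2 ^ n) = H1 Gp 2"
  using part1_surj reduce2_sub by blast



definition K3 :: "(int \<times> int \<times> int) monoid" where
  "K3 = \<lparr>carrier = {0..<4} \<times> {0..<2} \<times> {0..<2},
         monoid.mult = (\<lambda>(a1, b1, z1) (a2, b2, z2). ((a1 + a2) mod 4, (b1 + b2) mod 2, (z1 + z2 + a1 * b2) mod 2)),
         monoid.one = (0, 0, 0)\<rparr>"

lemma K3_mult: "(a1, b1, z1) \<otimes>\<^bsub>K3\<^esub> (a2, b2, z2) = ((a1 + a2) mod 4, (b1 + b2) mod 2, (z1 + z2 + a1 * b2) mod 2)"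
  by (simp add: K3_def)

lemma K3_one: "\<one>\<^bsub>K3\<^esub> = (0, 0, 0)" by (simp add: K3_def)
lemma K3_carrier: "carrier K3 = {0..<4} \<times> {0..<2} \<times> {0..<2}" by (simp add: K3_def)

lemma m4_2: "((x::int) mod 4 * y) mod 2 = (x * y) mod 2"
proof -
  have "((x::int) mod 4 * y) mod 2 = ((x mod 4) mod 2 * y) mod 2" by (simp add: mod_mult_left_eq)
  also have "\<dots> = (x mod 2 * y) mod 2" by (simp add: mod_mod_cancel)
  also have "\<dots> = (x * y) mod 2" by (simp add: mod_mult_left_eq)
  finally show ?thesis .
qed

lemma m4_2': "((w::int) + x mod 4 * y) mod 2 = (w + x * y) mod 2"
  by (metis m4_2 mod_add_right_eq)

lemma K3_assoc_z:
  "((z1 + z2 + a1 * b2) mod 2 + z3 + (a1 + a2) mod 4 * ((b3::int))) mod 2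
   = (z1 + (z2 + z3 + a2 * b3) mod 2 + a1 * ((b2 + b3) mod 2)) mod 2"
proof -
  have l: "((z1 + z2 + a1 * b2) mod 2 + z3 + (a1 + a2) mod 4 * b3) mod 2
      = (z1 + z2 + a1 * b2 + z3 + (a1 + a2) * b3) mod 2"
  proof -
    have "((z1 + z2 + a1 * b2) mod 2 + z3 + (a1 + a2) mod 4 * b3) mod 2
       = ((z1 + z2 + a1 * b2) mod 2 + z3 + (a1 + a2) * b3) mod 2" by (rule m4_2')
    also have "\<dots> = (z1 + z2 + a1 * b2 + z3 + (a1 + a2) * b3) mod 2"
      by (metis add.assoc mod_add_left_eq)
    finally show ?thesis .
  qed
  have r: "(z1 + (z2 + z3 + a2 * b3) mod 2 + a1 * ((b2 + b3) mod 2)) mod 2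
      = (z1 + (z2 + z3 + a2 * b3) + a1 * (b2 + b3)) mod 2"
  proof -
    have "(z1 + (z2 + z3 + a2 * b3) mod 2 + a1 * ((b2 + b3) mod 2)) mod 2
        = (z1 + (z2 + z3 + a2 * b3) mod 2 + (a1 * ((b2 + b3) mod 2)) mod 2) mod 2"
      by (simp add: mod_add_right_eq)
    also have "\<dots> = (z1 + (z2 + z3 + a2 * b3) mod 2 + (a1 * (b2 + b3)) mod 2) mod 2"
      by (simp add: mod_mult_right_eq)
    also have "\<dots> = (z1 + (z2 + z3 + a2 * b3) mod 2 + a1 * (b2 + b3)) mod 2"
      by (simp add: mod_add_right_eq)
    also have "\<dots> = ((z1 + (z2 + z3 + a2 * b3) mod 2) mod 2 + a1 * (b2 + b3)) mod 2"
      by (simp add: mod_add_left_eq)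
    also have "\<dots> = ((z1 + (z2 + z3 + a2 * b3)) mod 2 + a1 * (b2 + b3)) mod 2"
      by (simp add: mod_add_right_eq)
    also have "\<dots> = (z1 + (z2 + z3 + a2 * b3) + a1 * (b2 + b3)) mod 2"
      by (simp add: mod_add_left_eq)
    finally show ?thesis .
  qed
  show ?thesis unfolding l r by (simp add: algebra_simps)
qed

lemma group_K3: "group K3"
proof (rule groupI)
  fix x y assume "x \<in> carrier K3" "y \<in> carrier K3"
  then show "x \<otimes>\<^bsub>K3\<^esub> y \<in> carrier K3" by (auto simp: K3_def)
next
  show "\<one>\<^bsub>K3\<^esub> \<in> carrier K3" by (simp add: K3_def)
next
  fix x y z assume "x \<in> carrier K3" "y \<in> carrier K3" "z \<in> carrier K3"
  obtain a1 b1 z1 where x: "x = (a1, b1, z1)" by (cases x) auto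
  obtain a2 b2 z2 where y: "y = (a2, b2, z2)" by (cases y) auto
  obtain a3 b3 z3 where z: "z = (a3, b3, z3)" by (cases z) auto
  have L: "x \<otimes>\<^bsub>K3\<^esub> y \<otimes>\<^bsub>K3\<^esub> z = (((a1 + a2) mod 4 + a3) mod 4, ((b1 + b2) mod 2 + b3) mod 2,
      ((z1 + z2 + a1 * b2) mod 2 + z3 + (a1 + a2) mod 4 * b3) mod 2)"
    by (simp add: x y z K3_mult)
  have R: "x \<otimes>\<^bsub>K3\<^esub> (y \<otimes>\<^bsub>K3\<^esub> z) = ((a1 + (a2 + a3) mod 4) mod 4, (b1 + (b2 + b3) mod 2) mod 2,
      (z1 + (z2 + z3 + a2 * b3) mod 2 + a1 * ((b2 + b3) mod 2)) mod 2)"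
    by (simp add: x y z K3_mult)
  have c1: "((a1 + a2) mod 4 + a3) mod 4 = (a1 + (a2 + a3) mod 4) mod (4::int)"
    by (simp add: mod_simps add.assoc)
  have c2: "((b1 + b2) mod 2 + b3) mod 2 = (b1 + (b2 + b3) mod 2) mod (2::int)"
    by (simp add: mod_simps add.assoc)
  show "x \<otimes>\<^bsub>K3\<^esub> y \<otimes>\<^bsub>K3\<^esub> z = x \<otimes>\<^bsub>K3\<^esub> (y \<otimes>\<^bsub>K3\<^esub> z)"
    unfolding L R c1 c2 K3_assoc_z by (rule refl)
next
  fix x assume "x \<in> carrier K3"
  then show "\<one>\<^bsub>K3\<^esub> \<otimes>\<^bsub>K3\<^esub> x = x" by (auto simp: K3_def)
next
  fix x assume xc: "x \<in> carrier K3"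
  obtain a b z where x: "x = (a, b, z)" by (cases x) auto
  have "((- a) mod 4, b, (z + a * b) mod 2) \<otimes>\<^bsub>K3\<^esub> x = \<one>\<^bsub>K3\<^esub>"
  proof -
    have "((z + a * b) mod 2 + z + - a mod 4 * b) mod 2 = ((z + a * b) mod 2 + z + - a * b) mod 2"
      by (rule m4_2')
    also have "\<dots> = (z + a * b + z + - a * b) mod 2" by (metis add.assoc mod_add_left_eq)
    also have "\<dots> = 0" by simp
    finally have "((z + a * b) mod 2 + z + - a mod 4 * b) mod 2 = 0" .
    then show ?thesis unfolding x K3_mult K3_one by (simp add: mod_simps)
  qed
  moreover have "((- a) mod 4, b, (z + a * b) mod 2) \<in> carrier K3" using xc by (auto simp: x K3_carrier)
  ultimately show "\<exists>y\<in>carrier K3. y \<otimes>\<^bsub>K3\<^esub> x = \<one>\<^bsub>K3\<^esub>" by blast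
qed



definition \<phi>3 :: "letter \<Rightarrow> int \<times> int \<times> int" where
  "\<phi>3 l = (if fst l = Ga then (if snd l then (1, 0, 0) else (3, 0, 0)) else (0, 1, 0))"

lemma wh3: "wordhom K3 \<phi>3"
proof (rule wordhom.intro[OF group_K3])
  show "\<phi>3 l \<in> carrier K3" for l by (simp add: \<phi>3_def K3_carrier)
  show "\<phi>3 (g, s) \<otimes>\<^bsub>K3\<^esub> \<phi>3 (g, \<not> s) = \<one>\<^bsub>K3\<^esub>" for g s
    by (cases g; cases s) (simp_all add: \<phi>3_def K3_mult K3_one)
  show "\<phi>3 (Ga, True) \<otimes>\<^bsub>K3\<^esub> (\<phi>3 (Ga, True) \<otimes>\<^bsub>K3\<^esub> \<phi>3 (Gb, True)) =
    \<phi>3 (Gb, True) \<otimes>\<^bsub>K3\<^esub> (\<phi>3 (Ga, True) \<otimes>\<^bsub>K3\<^esub> \<phi>3 (Ga, True))"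
    by (simp add: \<phi>3_def K3_mult)
qed

definition h3 :: "letter list set \<Rightarrow> int \<times> int \<times> int" where
  "h3 = wordhom.hS K3 \<phi>3"

lemma h3_hom: "h3 \<in> hom Gp K3"
  unfolding h3_def by (rule wordhom.hS_hom[OF wh3])

lemma h3_cls: "h3 (cls w) = wordhom.wphi K3 \<phi>3 w"
  unfolding h3_def by (rule wordhom.hS_cls[OF wh3])

lemma h3_A: "h3 (cls [(Ga, True)]) = (1, 0, 0)"
  by (simp add: h3_cls wordhom.wphi.simps[OF wh3] \<phi>3_def K3_mult K3_one)
lemma h3_B: "h3 (cls [(Gb, True)]) = (0, 1, 0)"
  by (simp add: h3_cls wordhom.wphi.simps[OF wh3] \<phi>3_def K3_mult K3_one)
lemma h3_AA: "h3 (cls [(Ga, True), (Ga, True)]) = (2, 0, 0)"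
  by (simp add: h3_cls wordhom.wphi.simps[OF wh3] \<phi>3_def K3_mult K3_one)

lemma h3_carr: "x \<in> carrier Gp \<Longrightarrow> h3 x \<in> carrier K3"
  using hom_in_carrier[OF h3_hom] .

lemma h3_mult: "x \<in> carrier Gp \<Longrightarrow> y \<in> carrier Gp \<Longrightarrow> h3 (x \<otimes>\<^bsub>Gp\<^esub> y) = h3 x \<otimes>\<^bsub>K3\<^esub> h3 y"
  using hom_mult[OF h3_hom] .

lemma C1_from_h3:
  assumes "\<And>x. F x = (if x \<in> carrier Gp then G (h3 x) else 0)"
    and "\<And>k. k \<in> carrier K3 \<Longrightarrow> G k \<in> {0..<2}"
  shows "F \<in> C1 Gp 2"
proof -
  have "cont1 Gp F"
  proof (rule cont1_from_hom[OF group_Gp group_K3 h3_hom])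
    show "finite (carrier K3)" by (simp add: K3_carrier)
    show "card (carrier K3) = 2 ^ 4" by (simp add: K3_carrier card_cartesian_product)
    show "\<forall>x\<in>carrier Gp. \<forall>y\<in>carrier Gp. h3 x = h3 y \<longrightarrow> F x = F y" by (simp add: assms(1))
  qed
  moreover have "F x \<in> {0..<2}" for x using assms h3_carr[of x] by (cases "x \<in> carrier Gp") auto
  ultimately show ?thesis unfolding C1_def using assms(1) by auto
qed

definition chiA :: "letter list set \<Rightarrow> int" where
  "chiA x = (if x \<in> carrier Gp then fst (h3 x) mod 2 else 0)"
definition chiB :: "letter list set \<Rightarrow> int" where
  "chiB x = (if x \<in> carrier Gp then fst (snd (h3 x)) else 0)"
definition Tq :: "int \<Rightarrow> int" where
  "Tq a = (a * (a - 1) div 2) mod 2"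
definition uu :: "letter list set \<Rightarrow> int" where
  "uu x = (if x \<in> carrier Gp then Tq (fst (h3 x)) else 0)"
definition ww :: "letter list set \<Rightarrow> int" where
  "ww x = (if x \<in> carrier Gp then snd (snd (h3 x)) else 0)"

lemma chiA_C1: "chiA \<in> C1 Gp 2"
  by (rule C1_from_h3[of _ "\<lambda>k. fst k mod 2"]) (auto simp: chiA_def)
lemma chiB_C1: "chiB \<in> C1 Gp 2"
  by (rule C1_from_h3[of _ "\<lambda>k. fst (snd k)"]) (auto simp: chiB_def K3_carrier)
lemma uu_C1: "uu \<in> C1 Gp 2"
  by (rule C1_from_h3[of _ "\<lambda>k. Tq (fst k)"]) (auto simp: uu_def Tq_def)
lemma ww_C1: "ww \<in> C1 Gp 2"
  by (rule C1_from_h3[of _ "\<lambda>k. snd (snd k)"]) (auto simp: ww_def K3_carrier)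

lemma h3_split:
  assumes "x \<in> carrier Gp" "y \<in> carrier Gp"
  obtains a1 b1 z1 a2 b2 z2 where "h3 x = (a1, b1, z1)" "h3 y = (a2, b2, z2)"
    "a1 \<in> {0,1,2,3}" "b1 \<in> {0,1}" "z1 \<in> {0,1}" "a2 \<in> {0,1,2,3}" "b2 \<in> {0,1}" "z2 \<in> {0,1}"
    "h3 (x \<otimes>\<^bsub>Gp\<^esub> y) = ((a1 + a2) mod 4, (b1 + b2) mod 2, (z1 + z2 + a1 * b2) mod 2)"
proof -
  obtain a1 b1 z1 where x: "h3 x = (a1, b1, z1)" by (cases "h3 x") auto
  obtain a2 b2 z2 where y: "h3 y = (a2, b2, z2)" by (cases "h3 y") auto
  have r: "(a1, b1, z1) \<in> carrier K3" "(a2, b2, z2) \<in> carrier K3" using h3_carr assms x y by metis+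
  have "a1 \<in> {0,1,2,3}" "b1 \<in> {0,1}" "z1 \<in> {0,1}" "a2 \<in> {0,1,2,3}" "b2 \<in> {0,1}" "z2 \<in> {0,1}"
    using r by (auto simp: K3_carrier)
  moreover have "h3 (x \<otimes>\<^bsub>Gp\<^esub> y) = ((a1 + a2) mod 4, (b1 + b2) mod 2, (z1 + z2 + a1 * b2) mod 2)"
    using h3_mult[OF assms] x y by (simp add: K3_mult)
  ultimately show ?thesis using that x y by blast
qed

lemma chiA_H1: "chiA \<in> H1 Gp 2"
proof -
  have "(chiA y - chiA (x \<otimes>\<^bsub>Gp\<^esub> y) + chiA x) mod 2 = 0" if xy: "x \<in> carrier Gp" "y \<in> carrier Gp" for x y
  proof (rule h3_split[OF xy])
    fix a1 b1 z1 a2 b2 z2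
    assume h: "h3 x = (a1, b1, z1)" "h3 y = (a2, b2, z2)"
      "h3 (x \<otimes>\<^bsub>Gp\<^esub> y) = ((a1 + a2) mod 4, (b1 + b2) mod 2, (z1 + z2 + a1 * b2) mod 2)"
    have "chiA x = a1 mod 2" "chiA y = a2 mod 2" "chiA (x \<otimes>\<^bsub>Gp\<^esub> y) = ((a1 + a2) mod 4) mod 2"
      using h xy Gp_m_closed[OF xy] by (simp_all add: chiA_def)
    then show ?thesis by (simp only:) presburger
  qed
  then show ?thesis using chiA_C1 unfolding H1_def by auto
qed

lemma chiB_H1: "chiB \<in> H1 Gp 2"
proof -
  have "(chiB y - chiB (x \<otimes>\<^bsub>Gp\<^esub> y) + chiB x) mod 2 = 0" if xy: "x \<in> carrier Gp" "y \<in> carrier Gp" for x y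
  proof (rule h3_split[OF xy])
    fix a1 b1 z1 a2 b2 z2
    assume h: "h3 x = (a1, b1, z1)" "h3 y = (a2, b2, z2)"
      "h3 (x \<otimes>\<^bsub>Gp\<^esub> y) = ((a1 + a2) mod 4, (b1 + b2) mod 2, (z1 + z2 + a1 * b2) mod 2)"
    have "chiB x = b1" "chiB y = b2" "chiB (x \<otimes>\<^bsub>Gp\<^esub> y) = (b1 + b2) mod 2"
      using h xy Gp_m_closed[OF xy] by (simp_all add: chiB_def)
    then show ?thesis by (simp only:) presburger
  qed
  then show ?thesis using chiB_C1 unfolding H1_def by auto
qed

lemma Tq_arith: "a1 \<in> {0,1,2,3} \<Longrightarrow> a2 \<in> {0,1,2,3} \<Longrightarrow>
  (Tq a2 - Tq ((a1 + a2) mod 4) + Tq a1) mod 2 = (- (a1 mod 2 * (a2 mod 2))) mod 2"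
  by (auto simp: Tq_def)

lemma uu_d:
  assumes xy: "x \<in> carrier Gp" "y \<in> carrier Gp"
  shows "(uu y - uu (x \<otimes>\<^bsub>Gp\<^esub> y) + uu x) mod 2 = (- (chiA x * chiA y)) mod 2"
proof (rule h3_split[OF xy])
  fix a1 b1 z1 a2 b2 z2
  assume h: "h3 x = (a1, b1, z1)" "h3 y = (a2, b2, z2)" "a1 \<in> {0,1,2,3}" "a2 \<in> {0,1,2,3}"
    "h3 (x \<otimes>\<^bsub>Gp\<^esub> y) = ((a1 + a2) mod 4, (b1 + b2) mod 2, (z1 + z2 + a1 * b2) mod 2)"
  have "uu x = Tq a1" "uu y = Tq a2" "uu (x \<otimes>\<^bsub>Gp\<^esub> y) = Tq ((a1 + a2) mod 4)"
    "chiA x = a1 mod 2" "chiA y = a2 mod 2"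
    using h xy Gp_m_closed[OF xy] by (simp_all add: uu_def chiA_def)
  then show ?thesis using Tq_arith[OF h(3,4)] by simp
qed

lemma ww_arith: "a1 \<in> {0,1,2,3} \<Longrightarrow> b2 \<in> {0,1} \<Longrightarrow> z1 \<in> {0,1} \<Longrightarrow> z2 \<in> {0,1} \<Longrightarrow>
  ((z2::int) - (z1 + z2 + a1 * b2) mod 2 + z1) mod 2 = (- (a1 mod 2 * b2)) mod 2"
  by auto

lemma ww_d:
  assumes xy: "x \<in> carrier Gp" "y \<in> carrier Gp"
  shows "(ww y - ww (x \<otimes>\<^bsub>Gp\<^esub> y) + ww x) mod 2 = (- (chiA x * chiB y)) mod 2"
proof (rule h3_split[OF xy])
  fix a1 b1 z1 a2 b2 z2
  assume h: "h3 x = (a1, b1, z1)" "h3 y = (a2, b2, z2)" "a1 \<in> {0,1,2,3}" "b2 \<in> {0,1}"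
    "z1 \<in> {0,1}" "z2 \<in> {0,1}"
    "h3 (x \<otimes>\<^bsub>Gp\<^esub> y) = ((a1 + a2) mod 4, (b1 + b2) mod 2, (z1 + z2 + a1 * b2) mod 2)"
  have "ww x = z1" "ww y = z2" "ww (x \<otimes>\<^bsub>Gp\<^esub> y) = (z1 + z2 + a1 * b2) mod 2"
    "chiA x = a1 mod 2" "chiB y = b2"
    using h xy Gp_m_closed[OF xy] by (simp_all add: ww_def chiA_def chiB_def)
  then show ?thesis using ww_arith[OF h(3-6)] by simp
qed



lemma AB_comm: "cls [(Ga, True), (Ga, True)] \<otimes>\<^bsub>Gp\<^esub> cls [(Gb, True)] = cls [(Gb, True)] \<otimes>\<^bsub>Gp\<^esub> cls [(Ga, True), (Ga, True)]"
  using wrelator[of "[]" "[]"] by (simp add: cls_eq_iff)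

lemma part3_defined: "massey3_defined Gp chiA chiA chiB"
proof -
  let ?v = "\<lambda>x y. if x \<in> carrier Gp \<and> y \<in> carrier Gp
                    then (- (chiA x * ww y + uu x * chiB y)) mod 2 else 0"
  have "?v \<in> massey3_values Gp chiA chiA chiB"
    unfolding massey3_values_def using uu_C1 ww_C1 uu_d ww_d by blast
  then show ?thesis unfolding massey3_defined_def by blast
qed

lemma part3_nonvanish: "\<not> massey3_vanishes Gp chiA chiA chiB"
proof
  assume "massey3_vanishes Gp chiA chiA chiB"
  then obtain v c where vv: "v \<in> massey3_values Gp chiA chiA chiB" and
    dc: "\<forall>x\<in>carrier Gp. \<forall>y\<in>carrier Gp. v x y = (c y - c (x \<otimes>\<^bsub>Gp\<^esub> y) + c x) mod 2"
    unfolding massey3_vanishes_def by blast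
  from vv obtain a13 a24 where
    d13: "\<forall>x\<in>carrier Gp. \<forall>y\<in>carrier Gp.
           (a13 y - a13 (x \<otimes>\<^bsub>Gp\<^esub> y) + a13 x) mod 2 = (- (chiA x * chiA y)) mod 2" and
    vdef: "v = (\<lambda>x y. if x \<in> carrier Gp \<and> y \<in> carrier Gp
                    then (- (chiA x * a24 y + a13 x * chiB y)) mod 2 else 0)"
    unfolding massey3_values_def mem_Collect_eq by blast
  define A where "A = cls [(Ga, True)]"
  define B where "B = cls [(Gb, True)]"
  define A2 where "A2 = cls [(Ga, True), (Ga, True)]"
  have AA: "A \<otimes>\<^bsub>Gp\<^esub> A = A2" by (simp add: A_def A2_def)
  have comm: "A2 \<otimes>\<^bsub>Gp\<^esub> B = B \<otimes>\<^bsub>Gp\<^esub> A2" unfolding A2_def B_def by (rule AB_comm)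
  have vals: "chiA A = 1" "chiB A = 0" "chiA B = 0" "chiB B = 1" "chiA A2 = 0" "chiB A2 = 0"
    by (simp_all add: A_def B_def A2_def chiA_def chiB_def h3_A h3_B h3_AA)
  have cA: "A \<in> carrier Gp" "B \<in> carrier Gp" "A2 \<in> carrier Gp" by (simp_all add: A_def B_def A2_def)
  have R1: "(a13 A - a13 A2 + a13 A) mod 2 = (- 1) mod 2"
    using d13 cA AA vals by force
  have R3: "(- a13 A2) mod 2 = (c B - c (A2 \<otimes>\<^bsub>Gp\<^esub> B) + c A2) mod 2"
    using dc cA vals unfolding vdef by force
  have R4: "0 = (c A2 - c (B \<otimes>\<^bsub>Gp\<^esub> A2) + c B) mod 2"
    using dc cA vals unfolding vdef by force
  show False using R1 R3[unfolded comm] R4 by presburger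
qed

lemma part3: "\<exists>\<chi>1 \<chi>2 \<chi>3. \<chi>1 \<in> H1 Gp 2 \<and> \<chi>2 \<in> H1 Gp 2 \<and> \<chi>3 \<in> H1 Gp 2
            \<and> massey3_defined Gp \<chi>1 \<chi>2 \<chi>3 \<and> \<not> massey3_vanishes Gp \<chi>1 \<chi>2 \<chi>3"
  using chiA_H1 chiB_H1 part3_defined part3_nonvanish by blast



definition K2 :: "(int \<times> int \<times> int) monoid" where
  "K2 = \<lparr>carrier = {0..<2} \<times> {0..<2} \<times> {0..<2},
         monoid.mult = (\<lambda>(x1, y1, t1) (x2, y2, t2). if t1 = 0
              then ((x1 + x2) mod 2, (y1 + y2) mod 2, (t1 + t2) mod 2)
              else ((x1 + y2) mod 2, (y1 + x2) mod 2, (t1 + t2) mod 2)),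
         monoid.one = (0, 0, 0)\<rparr>"

lemma K2_mult: "(x1, y1, t1) \<otimes>\<^bsub>K2\<^esub> (x2, y2, t2) = (if t1 = 0
              then ((x1 + x2) mod 2, (y1 + y2) mod 2, (t1 + t2) mod 2)
              else ((x1 + y2) mod 2, (y1 + x2) mod 2, (t1 + t2) mod 2))"
  by (simp add: K2_def)

lemma K2_one: "\<one>\<^bsub>K2\<^esub> = (0, 0, 0)" by (simp add: K2_def)
lemma K2_carrier: "carrier K2 = {0..<2} \<times> {0..<2} \<times> {0..<2}" by (simp add: K2_def)

lemma group_K2: "group K2"
proof (rule groupI)
  fix x y assume "x \<in> carrier K2" "y \<in> carrier K2"
  then show "x \<otimes>\<^bsub>K2\<^esub> y \<in> carrier K2" by (auto simp: K2_def)
next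
  show "\<one>\<^bsub>K2\<^esub> \<in> carrier K2" by (simp add: K2_def)
next
  fix x y z assume xc: "x \<in> carrier K2" and yc: "y \<in> carrier K2" and zc: "z \<in> carrier K2"
  obtain a1 b1 z1 where x: "x = (a1, b1, z1)" by (cases x) auto
  obtain a2 b2 z2 where y: "y = (a2, b2, z2)" by (cases y) auto
  obtain a3 b3 z3 where z: "z = (a3, b3, z3)" by (cases z) auto
  have "z1 = 0 \<or> z1 = 1" "z2 = 0 \<or> z2 = 1" using xc yc by (auto simp: x y K2_carrier)
  then show "x \<otimes>\<^bsub>K2\<^esub> y \<otimes>\<^bsub>K2\<^esub> z = x \<otimes>\<^bsub>K2\<^esub> (y \<otimes>\<^bsub>K2\<^esub> z)"
    unfolding x y z by (elim disjE) (simp_all add: K2_mult mod_simps add_ac)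
next
  fix x assume "x \<in> carrier K2"
  then show "\<one>\<^bsub>K2\<^esub> \<otimes>\<^bsub>K2\<^esub> x = x" by (auto simp: K2_def)
next
  fix x assume xc: "x \<in> carrier K2"
  obtain a b t where x: "x = (a, b, t)" by (cases x) auto
  have r: "a \<in> {0,1}" "b \<in> {0,1}" "t \<in> {0,1}" using xc by (auto simp: x K2_carrier)
  define y where "y = (if t = 0 then (a, b, t) else (b, a, t))"
  have "y \<otimes>\<^bsub>K2\<^esub> x = \<one>\<^bsub>K2\<^esub>" using r unfolding y_def x K2_one by (auto simp: K2_mult)
  moreover have "y \<in> carrier K2" using r by (auto simp: y_def K2_carrier)
  ultimately show "\<exists>y\<in>carrier K2. y \<otimes>\<^bsub>K2\<^esub> x = \<one>\<^bsub>K2\<^esub>" by blast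
qed

definition \<phi>2 :: "letter \<Rightarrow> int \<times> int \<times> int" where
  "\<phi>2 l = (if fst l = Ga then (1, 0, 0) else (0, 0, 1))"

lemma wh2: "wordhom K2 \<phi>2"
proof (rule wordhom.intro[OF group_K2])
  show "\<phi>2 l \<in> carrier K2" for l by (simp add: \<phi>2_def K2_carrier)
  show "\<phi>2 (g, s) \<otimes>\<^bsub>K2\<^esub> \<phi>2 (g, \<not> s) = \<one>\<^bsub>K2\<^esub>" for g s
    by (cases g) (simp_all add: \<phi>2_def K2_mult K2_one)
  show "\<phi>2 (Ga, True) \<otimes>\<^bsub>K2\<^esub> (\<phi>2 (Ga, True) \<otimes>\<^bsub>K2\<^esub> \<phi>2 (Gb, True)) =
    \<phi>2 (Gb, True) \<otimes>\<^bsub>K2\<^esub> (\<phi>2 (Ga, True) \<otimes>\<^bsub>K2\<^esub> \<phi>2 (Ga, True))"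
    by (simp add: \<phi>2_def K2_mult)
qed

definition h2 :: "letter list set \<Rightarrow> int \<times> int \<times> int" where
  "h2 = wordhom.hS K2 \<phi>2"

lemma h2_hom: "h2 \<in> hom Gp K2"
  unfolding h2_def by (rule wordhom.hS_hom[OF wh2])

lemma h2_cls: "h2 (cls w) = wordhom.wphi K2 \<phi>2 w"
  unfolding h2_def by (rule wordhom.hS_cls[OF wh2])

lemma wphi2_t: "snd (snd (wordhom.wphi K2 \<phi>2 w)) = int (length (filter (\<lambda>l. fst l = Gb) w)) mod 2"
proof (induction w)
  case Nil then show ?case by (simp add: wordhom.wphi.simps[OF wh2] K2_one)
next
  case (Cons l w)
  obtain x y t where e: "wordhom.wphi K2 \<phi>2 w = (x, y, t)" by (cases "wordhom.wphi K2 \<phi>2 w") auto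
  have s: "wordhom.wphi K2 \<phi>2 (l # w) = \<phi>2 l \<otimes>\<^bsub>K2\<^esub> (x, y, t)"
    using e by (simp add: wordhom.wphi.simps[OF wh2])
  have tt: "t = int (length (filter (\<lambda>l. fst l = Gb) w)) mod 2" using Cons.IH e by simp
  show ?case unfolding s tt
    by (cases "fst l") (auto simp: \<phi>2_def K2_mult mod_simps)
qed

lemma Hsub_eq: "Hsub = {x \<in> carrier Gp. snd (snd (h2 x)) = 0}"
proof (rule Set.set_eqI)
  fix x show "x \<in> Hsub \<longleftrightarrow> x \<in> {x \<in> carrier Gp. snd (snd (h2 x)) = 0}"
  proof (cases "x \<in> carrier Gp")
    case True
    then obtain w where x: "x = cls w" using Gp_elem by blast
    have "even (length (filter (\<lambda>l. fst l = Gb) v)) \<longleftrightarrow> even (length (filter (\<lambda>l. fst l = Gb) w))"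
      if "v \<in> cls w" for v
    proof -
      have "cls v = cls w" using that by (simp add: mem_cls cls_eq_iff)
      then have "h2 (cls v) = h2 (cls w)" by simp
      then have "int (length (filter (\<lambda>l. fst l = Gb) v)) mod 2 = int (length (filter (\<lambda>l. fst l = Gb) w)) mod 2"
        using wphi2_t[of v] wphi2_t[of w] by (simp add: h2_cls)
      then show ?thesis by presburger
    qed
    moreover have "w \<in> cls w" by (simp add: mem_cls wrefl)
    moreover have "x \<in> Hsub \<longleftrightarrow> (\<forall>v\<in>cls w. even (length (filter (\<lambda>l. fst l = Gb) v)))"
      unfolding Hsub_def x using cls_in_Gp[of w] by blast
    ultimately have e1: "x \<in> Hsub \<longleftrightarrow> even (length (filter (\<lambda>l. fst l = Gb) w))"
      by blast
    have e2: "snd (snd (h2 x)) = int (length (filter (\<lambda>l. fst l = Gb) w)) mod 2"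
      using wphi2_t[of w] by (simp add: x h2_cls)
    have e3: "even (length (filter (\<lambda>l. fst l = Gb) w)) \<longleftrightarrow> int (length (filter (\<lambda>l. fst l = Gb) w)) mod 2 = 0"
      by presburger
    show ?thesis using e1 e2 e3 True by simp
  next
    case False then show ?thesis by (simp add: Hsub_def)
  qed
qed



lemma h2_carr: "x \<in> carrier Gp \<Longrightarrow> h2 x \<in> carrier K2"
  using hom_in_carrier[OF h2_hom] .

lemma h2_mult: "x \<in> carrier Gp \<Longrightarrow> y \<in> carrier Gp \<Longrightarrow> h2 (x \<otimes>\<^bsub>Gp\<^esub> y) = h2 x \<otimes>\<^bsub>K2\<^esub> h2 y"
  using hom_mult[OF h2_hom] .

lemma K2_t_mult: "snd (snd (p \<otimes>\<^bsub>K2\<^esub> q)) = (snd (snd p) + snd (snd q)) mod 2"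
  by (cases p; cases q) (simp add: K2_mult)

lemma K2_t_range: "p \<in> carrier K2 \<Longrightarrow> snd (snd p) \<in> {0, 1}"
  by (auto simp: K2_carrier)

lemma subgroup_Hsub: "subgroup Hsub Gp"
proof (rule group.subgroupI[OF group_Gp])
  show "Hsub \<subseteq> carrier Gp" by (auto simp: Hsub_def)
  have "h2 (cls []) = (0, 0, 0)" by (simp add: h2_cls wordhom.wphi.simps[OF wh2] K2_one)
  then have "cls [] \<in> Hsub" by (simp add: Hsub_eq)
  then show "Hsub \<noteq> {}" by blast
next
  fix a assume a: "a \<in> Hsub"
  then have ac: "a \<in> carrier Gp" and at: "snd (snd (h2 a)) = 0" by (auto simp: Hsub_eq)
  have ic: "inv\<^bsub>Gp\<^esub> a \<in> carrier Gp" using group.inv_closed[OF group_Gp ac] .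
  have "inv\<^bsub>Gp\<^esub> a \<otimes>\<^bsub>Gp\<^esub> a = cls []" using group.l_inv[OF group_Gp ac] by (simp add: one_Gp)
  then have "h2 (inv\<^bsub>Gp\<^esub> a) \<otimes>\<^bsub>K2\<^esub> h2 a = (0, 0, 0)"
    using h2_mult[OF ic ac] by (simp add: h2_cls wordhom.wphi.simps[OF wh2] K2_one)
  then have "(snd (snd (h2 (inv\<^bsub>Gp\<^esub> a))) + 0) mod 2 = 0" using K2_t_mult at by (metis snd_conv)
  then have "snd (snd (h2 (inv\<^bsub>Gp\<^esub> a))) = 0" using K2_t_range[OF h2_carr[OF ic]] by auto
  then show "inv\<^bsub>Gp\<^esub> a \<in> Hsub" using ic by (simp add: Hsub_eq)
next
  fix a b assume "a \<in> Hsub" "b \<in> Hsub"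
  then have c: "a \<in> carrier Gp" "b \<in> carrier Gp" and t: "snd (snd (h2 a)) = 0" "snd (snd (h2 b)) = 0"
    by (auto simp: Hsub_eq)
  then show "a \<otimes>\<^bsub>Gp\<^esub> b \<in> Hsub"
    using h2_mult[OF c] K2_t_mult Gp_m_closed[OF c] by (simp add: Hsub_eq)
qed

lemma group_Hp: "group Hp"
  unfolding Hp_def by (rule group.subgroup_imp_group[OF group_Gp subgroup_Hsub])

lemma carrier_Hp: "carrier Hp = Hsub" by (simp add: Hp_def)
lemma mult_Hp: "x \<otimes>\<^bsub>Hp\<^esub> y = x \<otimes>\<^bsub>Gp\<^esub> y" by (simp add: Hp_def)

lemma h2_hom_Hp: "h2 \<in> hom Hp K2"
  using h2_hom unfolding hom_def by (auto simp: carrier_Hp mult_Hp Hsub_def)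

definition chiH :: "letter list set \<Rightarrow> int" where
  "chiH x = (if x \<in> Hsub then fst (h2 x) else 0)"

lemma chiH_H1: "chiH \<in> H1 Hp 2"
proof -
  have "cont1 Hp chiH"
  proof (rule cont1_from_hom[OF group_Hp group_K2 h2_hom_Hp])
    show "finite (carrier K2)" by (simp add: K2_carrier)
    show "card (carrier K2) = 2 ^ 3" by (simp add: K2_carrier card_cartesian_product)
    show "\<forall>x\<in>carrier Hp. \<forall>y\<in>carrier Hp. h2 x = h2 y \<longrightarrow> chiH x = chiH y"
      by (simp add: chiH_def carrier_Hp)
  qed
  moreover have "chiH x \<in> {0..<2}" for x
    using h2_carr[of x] by (auto simp: chiH_def Hsub_def K2_carrier)
  moreover have "(chiH y - chiH (x \<otimes>\<^bsub>Hp\<^esub> y) + chiH x) mod 2 = 0"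
    if xy: "x \<in> carrier Hp" "y \<in> carrier Hp" for x y
  proof -
    have xs: "x \<in> Hsub" "y \<in> Hsub" using xy by (simp_all add: carrier_Hp)
    then have c: "x \<in> carrier Gp" "y \<in> carrier Gp" and t: "snd (snd (h2 x)) = 0" "snd (snd (h2 y)) = 0"
      by (auto simp: Hsub_eq)
    obtain x1 y1 where hx: "h2 x = (x1, y1, 0)" using t(1) by (cases "h2 x") auto
    obtain x2 y2 where hy: "h2 y = (x2, y2, 0)" using t(2) by (cases "h2 y") auto
    have xys: "x \<otimes>\<^bsub>Gp\<^esub> y \<in> Hsub" using subgroup.m_closed[OF subgroup_Hsub xs] .
    have "h2 (x \<otimes>\<^bsub>Gp\<^esub> y) = ((x1 + x2) mod 2, (y1 + y2) mod 2, 0)"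
      using h2_mult[OF c] hx hy by (simp add: K2_mult)
    then show ?thesis using xs xys hx hy by (simp add: chiH_def mult_Hp mod_cocycle)
  qed
  ultimately show ?thesis unfolding H1_def C1_def by (auto simp: chiH_def carrier_Hp)
qed

lemma XX_YY: "cls [(Ga, True)] \<otimes>\<^bsub>Gp\<^esub> cls [(Ga, True)] =
   cls [(Gb, True), (Ga, True), (Gb, False)] \<otimes>\<^bsub>Gp\<^esub> cls [(Gb, True), (Ga, True), (Gb, False)]"
proof -
  have 1: "wrel [(Gb, True), (Ga, True), (Gb, False), (Gb, True), (Ga, True), (Gb, False)]
                [(Gb, True), (Ga, True), (Ga, True), (Gb, False)]"
    using wcancel[of "[(Gb, True), (Ga, True)]" Gb False "[(Ga, True), (Gb, False)]"] by simp
  have 2: "wrel [(Gb, True), (Ga, True), (Ga, True), (Gb, False)] [(Ga, True), (Ga, True), (Gb, True), (Gb, False)]"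
    using wsym[OF wrelator[of "[]" "[(Gb, False)]"]] by simp
  have 3: "wrel [(Ga, True), (Ga, True), (Gb, True), (Gb, False)] [(Ga, True), (Ga, True)]"
    using wcancel[of "[(Ga, True), (Ga, True)]" Gb True "[]"] by simp
  show ?thesis using wtrans[OF wtrans[OF 1 2] 3] by (simp add: cls_eq_iff wsym)
qed

lemma part2: "reduce2 ` H1 Hp 4 \<noteq> H1 Hp 2"
proof
  assume "reduce2 ` H1 Hp 4 = H1 Hp 2"
  then obtain F where F: "F \<in> H1 Hp 4" and rF: "reduce2 F = chiH" using chiH_H1 by (metis imageE)
  define XA where "XA = cls [(Ga, True)]"
  define YB where "YB = cls [(Gb, True), (Ga, True), (Gb, False)]"
  have hX: "h2 XA = (1, 0, 0)" by (simp add: XA_def h2_cls wordhom.wphi.simps[OF wh2] \<phi>2_def K2_mult K2_one)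
  have hY: "h2 YB = (0, 1, 0)" by (simp add: YB_def h2_cls wordhom.wphi.simps[OF wh2] \<phi>2_def K2_mult K2_one)
  have XH: "XA \<in> carrier Hp" "YB \<in> carrier Hp" using hX hY by (simp_all add: carrier_Hp Hsub_eq XA_def YB_def)
  have "chiH XA = 1" "chiH YB = 0" using hX hY XH by (simp_all add: chiH_def carrier_Hp)
  then have m: "F XA mod 2 = 1" "F YB mod 2 = 0" using rF unfolding reduce2_def by (metis)+
  have "F (XA \<otimes>\<^bsub>Hp\<^esub> XA) = (F XA + F XA) mod 4" "F (YB \<otimes>\<^bsub>Hp\<^esub> YB) = (F YB + F YB) mod 4"
    using H1_hom[OF F] XH by auto
  moreover have "XA \<otimes>\<^bsub>Hp\<^esub> XA = YB \<otimes>\<^bsub>Hp\<^esub> YB" unfolding mult_Hp XA_def YB_def by (rule XX_YY)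
  ultimately have "(F XA + F XA) mod 4 = (F YB + F YB) mod 4" by simp
  then show False using m by presburger
qed


theorem proposition8p1:
  shows "(\<forall>n::nat. n \<ge> 1 \<longrightarrow> reduce2 ` H1 Gp (2 ^ n) = H1 Gp 2)
       \<and> reduce2 ` H1 Hp 4 \<noteq> H1 Hp 2
       \<and> (\<exists>\<chi>1 \<chi>2 \<chi>3. \<chi>1 \<in> H1 Gp 2 \<and> \<chi>2 \<in> H1 Gp 2 \<and> \<chi>3 \<in> H1 Gp 2
            \<and> massey3_defined Gp \<chi>1 \<chi>2 \<chi>3 \<and> \<not> massey3_vanishes Gp \<chi>1 \<chi>2 \<chi>3)"
  using part1 part2 part3 by blast

end
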